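(* Let $M_1$ and $M_2$ be matroids on disjoint ground sets $E_1$ and $E_2$, of ranks $r_1$ and $r_2$. Let $\mathcal{A}\subseteq\mathcal{B}(M_1\oplus M_2)$ be nonempty. Then $\mathcal{A}$ is the collection of bases of a matroid on $E_1\cup E_2$ if and only if $\mathcal{A}=\{X\cup Y : X\in\mathcal{A}_1,\ Y\in\mathcal{A}_2\}$ for some $\mathcal{A}_1\subseteq\mathcal{B}(M_1)$ and $\mathcal{A}_2\subseteq\mathcal{B}(M_2)$ which are collections of bases of matroids (on $E_1$ and $E_2$ respectively).
   Context: The direct sum $M_1\oplus M_2$ of matroids on disjoint ground sets $E_1,E_2$ is the matroid on $E_1\cup E_2$ with bases $\{B_1\cup B_2: B_1\in\mathcal{B}(M_1),\ B_2\in\mathcal{B}(M_2)\}$; it has rank $r_1+r_2$. *)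

theory Defs
  imports Main
begin

definition matroid_bases :: "'a set \<Rightarrow> 'a set set \<Rightarrow> bool" where
  "matroid_bases E \<B> \<longleftrightarrow>
     finite E \<and> \<B> \<noteq> {} \<and> (\<forall>X\<in>\<B>. X \<subseteq> E) \<and>
     (\<forall>X\<in>\<B>. \<forall>Y\<in>\<B>. \<forall>x\<in>X - Y. \<exists>y\<in>Y - X. insert y (X - {x}) \<in> \<B>)"

definition sum_bases :: "'a set set \<Rightarrow> 'a set set \<Rightarrow> 'a set set" where
  "sum_bases \<B>1 \<B>2 = {X \<union> Y | X Y. X \<in> \<B>1 \<and> Y \<in> \<B>2}"

end

theory Submission
  imports Defs
begin

lemma antichain:
  assumes "matroid_bases E B" "X \<in> B" "Y \<in> B" "X \<subseteq> Y"
  shows "X = Y"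
proof (rule ccontr)
  assume "X \<noteq> Y"
  then obtain x where "x \<in> Y - X" using assms(4) by blast
  then obtain y where "y \<in> X - Y" using assms unfolding matroid_bases_def by blast
  then show False using assms(4) by blast
qed

lemma split_mem:
  assumes "matroid_bases E1 B1" "matroid_bases E2 B2" "E1 \<inter> E2 = {}"
    "A \<subseteq> sum_bases B1 B2" "Z \<in> A"
  shows "Z \<inter> E1 \<in> B1 \<and> Z \<inter> E2 \<in> B2 \<and> Z \<subseteq> E1 \<union> E2"
proof -
  obtain X Y where "Z = X \<union> Y" "X \<in> B1" "Y \<in> B2"
    using assms(4,5) unfolding sum_bases_def by blast
  moreover have "X \<subseteq> E1" "Y \<subseteq> E2" using assms(1,2) calculation unfolding matroid_bases_def by auto
  ultimately have "Z \<inter> E1 = X" "Z \<inter> E2 = Y" using assms(3) by auto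
  then show ?thesis using \<open>X \<in> B1\<close> \<open>Y \<in> B2\<close> \<open>Z = X \<union> Y\<close> \<open>X \<subseteq> E1\<close> \<open>Y \<subseteq> E2\<close> by auto
qed

theorem lemma2:
  fixes E1 E2 :: "'a set" and \<B>1 \<B>2 \<A> :: "'a set set"
  assumes "matroid_bases E1 \<B>1" and "matroid_bases E2 \<B>2"
    and "E1 \<inter> E2 = {}"
    and "\<A> \<subseteq> sum_bases \<B>1 \<B>2" and "\<A> \<noteq> {}"
  shows "matroid_bases (E1 \<union> E2) \<A> \<longleftrightarrow>
    (\<exists>\<A>1 \<A>2. \<A>1 \<subseteq> \<B>1 \<and> \<A>2 \<subseteq> \<B>2 \<and>
       matroid_bases E1 \<A>1 \<and> matroid_bases E2 \<A>2 \<and>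
       \<A> = sum_bases \<A>1 \<A>2)"
proof
  have S: "\<And>Z. Z \<in> \<A> \<Longrightarrow> Z \<inter> E1 \<in> \<B>1 \<and> Z \<inter> E2 \<in> \<B>2 \<and> Z \<subseteq> E1 \<union> E2"
    using split_mem[OF assms(1-4)] by blast
  have fin1: "finite E1" and fin2: "finite E2" using assms(1,2) unfolding matroid_bases_def by auto
  assume M: "matroid_bases (E1 \<union> E2) \<A>"
  have ex: "\<And>X Y x. X \<in> \<A> \<Longrightarrow> Y \<in> \<A> \<Longrightarrow> x \<in> X - Y \<Longrightarrow> \<exists>y\<in>Y - X. insert y (X - {x}) \<in> \<A>"
    using M unfolding matroid_bases_def by blast
  define A1 where "A1 = (\<lambda>X. X \<inter> E1) ` \<A>"
  define A2 where "A2 = (\<lambda>X. X \<inter> E2) ` \<A>"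
  have sub1: "A1 \<subseteq> \<B>1" and sub2: "A2 \<subseteq> \<B>2" using S unfolding A1_def A2_def by auto
  have m1: "matroid_bases E1 A1"
    unfolding matroid_bases_def
  proof (intro conjI ballI)
    show "finite E1" by (rule fin1)
    show "A1 \<noteq> {}" using assms(5) unfolding A1_def by auto
    show "X \<subseteq> E1" if "X \<in> A1" for X using that unfolding A1_def by auto
    fix X' Y' x assume X': "X' \<in> A1" and Y': "Y' \<in> A1" and x: "x \<in> X' - Y'"
    obtain X Y where XY: "X \<in> \<A>" "Y \<in> \<A>" "X' = X \<inter> E1" "Y' = Y \<inter> E1"
      using X' Y' unfolding A1_def by auto
    have "x \<in> X - Y" using x XY by auto
    then obtain y where y: "y \<in> Y - X" and Z: "insert y (X - {x}) \<in> \<A>" using ex XY by blast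
    have yE1: "y \<in> E1"
    proof (rule ccontr)
      assume "y \<notin> E1"
      then have "insert y (X - {x}) \<inter> E1 \<subseteq> X \<inter> E1" by auto
      then have h: "insert y (X - {x}) \<inter> E1 = X \<inter> E1"
        using antichain[OF assms(1)] S Z XY by blast
      have xin: "x \<in> X \<inter> E1" using x XY(3) by blast
      have "x \<noteq> y" using xin y by blast
      then have "x \<notin> insert y (X - {x}) \<inter> E1" by blast
      then show False using h xin by blast
    qed
    show "\<exists>y\<in>Y' - X'. insert y (X' - {x}) \<in> A1"
    proof (intro bexI)
      show "insert y (X' - {x}) \<in> A1" unfolding A1_def
        using Z yE1 XY by (intro image_eqI[where x="insert y (X - {x})"]) auto
      show "y \<in> Y' - X'" using y yE1 XY by auto
    qed
  qed
  have m2: "matroid_bases E2 A2"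
    unfolding matroid_bases_def
  proof (intro conjI ballI)
    show "finite E2" by (rule fin2)
    show "A2 \<noteq> {}" using assms(5) unfolding A2_def by auto
    show "X \<subseteq> E2" if "X \<in> A2" for X using that unfolding A2_def by auto
    fix X' Y' x assume X': "X' \<in> A2" and Y': "Y' \<in> A2" and x: "x \<in> X' - Y'"
    obtain X Y where XY: "X \<in> \<A>" "Y \<in> \<A>" "X' = X \<inter> E2" "Y' = Y \<inter> E2"
      using X' Y' unfolding A2_def by auto
    have "x \<in> X - Y" using x XY by auto
    then obtain y where y: "y \<in> Y - X" and Z: "insert y (X - {x}) \<in> \<A>" using ex XY by blast
    have yE2: "y \<in> E2"
    proof (rule ccontr)
      assume "y \<notin> E2"
      then have "insert y (X - {x}) \<inter> E2 \<subseteq> X \<inter> E2" by auto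
      then have h: "insert y (X - {x}) \<inter> E2 = X \<inter> E2"
        using antichain[OF assms(2)] S Z XY by blast
      have xin: "x \<in> X \<inter> E2" using x XY(3) by blast
      have "x \<noteq> y" using xin y by blast
      then have "x \<notin> insert y (X - {x}) \<inter> E2" by blast
      then show False using h xin by blast
    qed
    show "\<exists>y\<in>Y' - X'. insert y (X' - {x}) \<in> A2"
    proof (intro bexI)
      show "insert y (X' - {x}) \<in> A2" unfolding A2_def
        using Z yE2 XY by (intro image_eqI[where x="insert y (X - {x})"]) auto
      show "y \<in> Y' - X'" using y yE2 XY by auto
    qed
  qed
  have key: "\<And>X Y. X \<in> \<A> \<Longrightarrow> Y \<in> \<A> \<Longrightarrow> (X \<inter> E1) \<union> (Y \<inter> E2) \<in> \<A>"
  proof -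
    fix X Y assume X: "X \<in> \<A>" and Y: "Y \<in> \<A>"
    have "\<forall>Z\<in>\<A>. Z \<inter> E1 = X \<inter> E1 \<longrightarrow> card (Z \<inter> E2 - Y) = n \<longrightarrow> (X \<inter> E1) \<union> (Y \<inter> E2) \<in> \<A>" for n
    proof (induction n rule: less_induct)
      case (less n)
      show ?case
      proof (intro ballI impI)
        fix Z assume Z: "Z \<in> \<A>" and Z1: "Z \<inter> E1 = X \<inter> E1" and cn: "card (Z \<inter> E2 - Y) = n"
        show "(X \<inter> E1) \<union> (Y \<inter> E2) \<in> \<A>"
        proof (cases "Z \<inter> E2 \<subseteq> Y")
          case True
          then have "Z \<inter> E2 \<subseteq> Y \<inter> E2" by auto
          then have "Z \<inter> E2 = Y \<inter> E2" using antichain[OF assms(2)] S Z Y by blast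
          moreover have "Z = (Z \<inter> E1) \<union> (Z \<inter> E2)" using S Z by blast
          ultimately show ?thesis using Z Z1 by simp
        next
          case False
          then obtain x where x: "x \<in> Z \<inter> E2" "x \<notin> Y" by blast
          then obtain y where y: "y \<in> Y - Z" and Z': "insert y (Z - {x}) \<in> \<A>" using ex Z Y by blast
          have yE2: "y \<in> E2"
          proof (rule ccontr)
            assume "y \<notin> E2"
            then have "insert y (Z - {x}) \<inter> E2 \<subseteq> Z \<inter> E2" by auto
            then have "insert y (Z - {x}) \<inter> E2 = Z \<inter> E2"
              using antichain[OF assms(2)] S Z Z' by blast
            moreover have "x \<noteq> y" using x y by blast
            ultimately show False using x by blast
          qed
          have "y \<notin> E1" using yE2 assms(3) by blast
          have xE1: "x \<notin> E1" using x assms(3) by blast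
          have Z'1: "insert y (Z - {x}) \<inter> E1 = X \<inter> E1" using Z1 \<open>y \<notin> E1\<close> xE1 by auto
          have eq: "insert y (Z - {x}) \<inter> E2 - Y = (Z \<inter> E2 - Y) - {x}" using y by auto
          have "finite (Z \<inter> E2 - Y)" using fin2 by auto
          then have "card (insert y (Z - {x}) \<inter> E2 - Y) < n"
          proof -
            have "x \<in> Z \<inter> E2 - Y" using x by blast
            then have "card ((Z \<inter> E2 - Y) - {x}) < card (Z \<inter> E2 - Y)"
              using \<open>finite (Z \<inter> E2 - Y)\<close> by (metis card_Diff1_less)
            then show ?thesis using eq cn by simp
          qed
          then show ?thesis using less.IH[rule_format, OF _ Z' Z'1 refl] by blast
        qed
      qed
    qed
    from this[rule_format, OF X refl refl] show "(X \<inter> E1) \<union> (Y \<inter> E2) \<in> \<A>" .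
  qed
  have eqA: "\<A> = sum_bases A1 A2"
  proof
    show "\<A> \<subseteq> sum_bases A1 A2"
    proof
      fix Z assume Z: "Z \<in> \<A>"
      have "Z = (Z \<inter> E1) \<union> (Z \<inter> E2)" using S Z by blast
      moreover have "Z \<inter> E1 \<in> A1" "Z \<inter> E2 \<in> A2" unfolding A1_def A2_def using Z by auto
      ultimately show "Z \<in> sum_bases A1 A2" unfolding sum_bases_def by blast
    qed
    show "sum_bases A1 A2 \<subseteq> \<A>"
    proof
      fix W assume "W \<in> sum_bases A1 A2"
      then obtain P Q where W: "W = P \<union> Q" "P \<in> A1" "Q \<in> A2" unfolding sum_bases_def by blast
      then obtain X Y where "X \<in> \<A>" "Y \<in> \<A>" "P = X \<inter> E1" "Q = Y \<inter> E2"
        unfolding A1_def A2_def by blast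
      then show "W \<in> \<A>" using key W(1) by simp
    qed
  qed
  show "\<exists>\<A>1 \<A>2. \<A>1 \<subseteq> \<B>1 \<and> \<A>2 \<subseteq> \<B>2 \<and>
       matroid_bases E1 \<A>1 \<and> matroid_bases E2 \<A>2 \<and> \<A> = sum_bases \<A>1 \<A>2"
    using sub1 sub2 m1 m2 eqA by (intro exI[of _ A1] exI[of _ A2]) simp
next
  assume "\<exists>\<A>1 \<A>2. \<A>1 \<subseteq> \<B>1 \<and> \<A>2 \<subseteq> \<B>2 \<and>
       matroid_bases E1 \<A>1 \<and> matroid_bases E2 \<A>2 \<and> \<A> = sum_bases \<A>1 \<A>2"
  then obtain A1 A2 where m1: "matroid_bases E1 A1" and m2: "matroid_bases E2 A2"
    and eqA: "\<A> = sum_bases A1 A2" by (elim exE conjE)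
  have d: "E1 \<inter> E2 = {}" by (rule assms(3))
  have sb1: "\<And>P. P \<in> A1 \<Longrightarrow> P \<subseteq> E1" using m1 unfolding matroid_bases_def by blast
  have sb2: "\<And>P. P \<in> A2 \<Longrightarrow> P \<subseteq> E2" using m2 unfolding matroid_bases_def by blast
  have ex1: "\<And>X Y x. X \<in> A1 \<Longrightarrow> Y \<in> A1 \<Longrightarrow> x \<in> X - Y \<Longrightarrow> \<exists>y\<in>Y - X. insert y (X - {x}) \<in> A1"
    using m1 unfolding matroid_bases_def by blast
  have ex2: "\<And>X Y x. X \<in> A2 \<Longrightarrow> Y \<in> A2 \<Longrightarrow> x \<in> X - Y \<Longrightarrow> \<exists>y\<in>Y - X. insert y (X - {x}) \<in> A2"
    using m2 unfolding matroid_bases_def by blast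
  show "matroid_bases (E1 \<union> E2) \<A>"
    unfolding matroid_bases_def
  proof (intro conjI ballI)
    have "finite E1" "finite E2" using m1 m2 unfolding matroid_bases_def by (simp_all only:)
    then show "finite (E1 \<union> E2)" by simp
    show "\<A> \<noteq> {}" by (rule assms(5))
    show "X \<subseteq> E1 \<union> E2" if "X \<in> \<A>" for X
    proof -
      have "X \<in> sum_bases A1 A2" using that eqA by simp
      then obtain P Q where PQ: "X = P \<union> Q" "P \<in> A1" "Q \<in> A2" unfolding sum_bases_def by blast
      have "P \<subseteq> E1" using sb1 PQ(2) .
      moreover have "Q \<subseteq> E2" using sb2 PQ(3) .
      ultimately show ?thesis unfolding PQ(1) by blast
    qed
    fix X Y x assume X: "X \<in> \<A>" and Y: "Y \<in> \<A>" and x: "x \<in> X - Y"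
    obtain X1 X2 where Xs: "X = X1 \<union> X2" "X1 \<in> A1" "X2 \<in> A2" using X unfolding eqA sum_bases_def by blast
    obtain Y1 Y2 where Ys: "Y = Y1 \<union> Y2" "Y1 \<in> A1" "Y2 \<in> A2" using Y unfolding eqA sum_bases_def by blast
    have s: "X1 \<subseteq> E1" "Y1 \<subseteq> E1" "X2 \<subseteq> E2" "Y2 \<subseteq> E2"
      using Xs Ys sb1 sb2 by simp_all
    show "\<exists>y\<in>Y - X. insert y (X - {x}) \<in> \<A>"
    proof (cases "x \<in> X1")
      case True
      then have "x \<in> X1 - Y1" using x Ys by auto
      then obtain y where y: "y \<in> Y1 - X1" "insert y (X1 - {x}) \<in> A1"
        using ex1 Xs Ys by blast
      have "y \<notin> X2" using y s d by blast
      have "x \<notin> X2" using True s d by blast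
      have "insert y (X - {x}) = insert y (X1 - {x}) \<union> X2" using Xs \<open>x \<notin> X2\<close> by auto
      then have "insert y (X - {x}) \<in> \<A>" unfolding eqA sum_bases_def using y Xs by blast
      moreover have "y \<in> Y - X" using y Ys Xs \<open>y \<notin> X2\<close> by auto
      ultimately show ?thesis by blast
    next
      case False
      then have "x \<in> X2 - Y2" using x Xs Ys by auto
      then obtain y where y: "y \<in> Y2 - X2" "insert y (X2 - {x}) \<in> A2"
        using ex2 Xs Ys by blast
      have "y \<notin> X1" using y s d by blast
      have "insert y (X - {x}) = X1 \<union> insert y (X2 - {x})" using Xs False by auto
      then have "insert y (X - {x}) \<in> \<A>" unfolding eqA sum_bases_def using y Xs by blast
      moreover have "y \<in> Y - X" using y Ys Xs \<open>y \<notin> X1\<close> by auto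
      ultimately show ?thesis by blast
    qed
  qed
qed

end
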